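(* Let $(a_0,\ldots,a_n)$ be a finite sequence of positive integers and $m\ge 1$ an integer. For a positive integer $N$ let $\beta^N$ be the number whose continued fraction digits (indexed from $0$) are $a_0,\ldots,a_n$ in positions $0,\ldots,n$, $N$ in position $n+m$, and $1$ in all other positions. Then for every positive integer $N$: (1) for $0\le i\le n+m$, $\left|\log\frac{\alpha_i(\beta^N)}{\alpha_i(\beta^{N+1})}\right|<2^{i-(n+m)}/N$; (2) for $0\le i<n+m$, $\left|\log\frac{\alpha_i(\beta^N)}{\alpha_i(\beta^1)}\right|<2^{i-(n+m)}$; (3) for $0\le i<n+m$, $\left|\log\frac{\log(1/\alpha_i(\beta^N))}{\log(1/\alpha_i(\beta^{N+1}))}\right|<2^{i-(n+m)+1}$; (4) for $0\le i<n+m-1$, $\left|\log\frac{\log(1/\alpha_i(\beta^N))}{\log(1/\alpha_i(\beta^1))}\right|<2^{i-(n+m)+1}$.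
   Context: For positive integers $d_0,d_1,\ldots$, $[d_0,d_1,d_2,\ldots]$ denotes the continued fraction $\cfrac{1}{d_0+\cfrac{1}{d_1+\cfrac{1}{d_2+\cdots}}}$, and for $\beta=[d_0,d_1,\ldots]$ we write $\alpha_j(\beta)=[d_j,d_{j+1},\ldots]$. *)

theory Defs
  imports Complex_Main
begin

fun cf_fin :: "(nat \<Rightarrow> nat) \<Rightarrow> nat \<Rightarrow> real" where
  "cf_fin d 0 = 0"
| "cf_fin d (Suc k) = 1 / (real (d 0) + cf_fin (\<lambda>j. d (Suc j)) k)"

definition cf_val :: "(nat \<Rightarrow> nat) \<Rightarrow> real" where
  "cf_val d = lim (\<lambda>k. cf_fin d k)"

definition cf_alpha :: "(nat \<Rightarrow> nat) \<Rightarrow> nat \<Rightarrow> real" where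
  "cf_alpha d j = cf_val (\<lambda>k. d (j + k))"

definition beta_digits :: "(nat \<Rightarrow> nat) \<Rightarrow> nat \<Rightarrow> nat \<Rightarrow> nat \<Rightarrow> nat \<Rightarrow> nat" where
  "beta_digits a n m N k = (if k \<le> n then a k else if k = n + m then N else 1)"

end

theory Submission
  imports Defs
begin

definition gg :: real where "gg = (sqrt 5 - 1) / 2"

lemma gg_pos: "0 < gg" and gg_lt: "gg < 0.62" and gg_eq: "gg = 1 / (1 + gg)"
proof -
  have s1: "sqrt 5 > 1" by (simp add: real_less_rsqrt)
  have gp: "0 < gg" using s1 by (simp add: gg_def)
  then show "0 < gg" .
  have "sqrt 5 < 2.24" by (rule real_less_lsqrt) (simp_all add: power2_eq_square)
  then show "gg < 0.62" by (simp add: gg_def)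
  have sq: "sqrt 5 * sqrt 5 = 5" by simp
  have e: "gg * (1 + gg) = 1" unfolding gg_def using sq by (simp add: field_simps)
  have "1 + gg > 0" using gp by linarith
  then show "gg = 1 / (1 + gg)" using e by (simp add: eq_divide_eq)
qed

lemma cf_one_lim: "(\<lambda>k. cf_fin (\<lambda>_. 1) k) \<longlonglongrightarrow> gg"
proof -
  define c where "c = (\<lambda>k. cf_fin (\<lambda>_. 1) k)"
  have rec: "c (Suc k) = 1 / (1 + c k)" for k by (simp add: c_def)
  have nn: "c k \<ge> 0" for k by (induction k) (simp_all add: rec, simp add: c_def)
  have step: "\<bar>c (Suc k) - gg\<bar> \<le> \<bar>c k - gg\<bar> / (1 + gg)" for k
  proof -
    have "c (Suc k) - gg = 1/(1 + c k) - 1/(1+gg)" using rec gg_eq by metis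
    also have "\<dots> = (gg - c k) / ((1 + c k) * (1 + gg))"
      using nn[of k] gg_pos by (simp add: field_simps)
    finally have "\<bar>c (Suc k) - gg\<bar> = \<bar>c k - gg\<bar> / ((1 + c k) * (1 + gg))"
      using nn[of k] gg_pos by (simp add: abs_minus_commute abs_mult)
    also have "\<dots> \<le> \<bar>c k - gg\<bar> / (1 + gg)"
      using nn[of k] gg_pos by (intro divide_left_mono) (auto simp: mult_pos_pos)
    finally show ?thesis .
  qed
  have bnd: "\<bar>c k - gg\<bar> \<le> gg * (1 / (1 + gg)) ^ k" for k
  proof (induction k)
    case 0 then show ?case using gg_pos by (simp add: c_def)
  next
    case (Suc k)
    have "\<bar>c (Suc k) - gg\<bar> \<le> \<bar>c k - gg\<bar> / (1 + gg)" by (rule step)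
    also have "\<dots> \<le> gg * (1 / (1 + gg)) ^ k / (1 + gg)"
      using Suc gg_pos by (intro divide_right_mono) auto
    finally show ?case by (simp add: field_simps)
  qed
  have "(\<lambda>k. gg * (1 / (1 + gg)) ^ k) \<longlonglongrightarrow> gg * 0"
    using gg_pos by (intro tendsto_mult tendsto_const LIMSEQ_power_zero) auto
  then have z: "(\<lambda>k. gg * (1 / (1 + gg)) ^ k) \<longlonglongrightarrow> 0" by simp
  have "(\<lambda>k. c k - gg) \<longlonglongrightarrow> 0"
  proof (rule tendsto_0_le[OF z, where K=1])
    show "\<forall>\<^sub>F k in sequentially. norm (c k - gg) \<le> norm (gg * (1 / (1 + gg)) ^ k) * 1"
      using bnd gg_pos by (intro always_eventually allI) (simp add: abs_mult)
  qed
  then have "c \<longlonglongrightarrow> gg" by (simp add: LIM_zero_iff)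
  then show ?thesis by (simp add: c_def)
qed

lemma cf_step_lim:
  assumes "(\<lambda>k. cf_fin (\<lambda>j. d (Suc j)) k) \<longlonglongrightarrow> L" "L \<ge> 0" "d 0 \<ge> 1"
  shows "(\<lambda>k. cf_fin d k) \<longlonglongrightarrow> 1 / (real (d 0) + L)"
proof -
  have "(\<lambda>k. 1 / (real (d 0) + cf_fin (\<lambda>j. d (Suc j)) k)) \<longlonglongrightarrow> 1 / (real (d 0) + L)"
    using assms by (intro tendsto_intros) auto
  then have "(\<lambda>k. cf_fin d (Suc k)) \<longlonglongrightarrow> 1 / (real (d 0) + L)" by simp
  then show ?thesis by (rule filterlim_sequentially_Suc[THEN iffD1])
qed

lemma cf_conv:
  assumes pos: "\<forall>k. D k \<ge> 1" and ev: "\<forall>k\<ge>M. D k = 1"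
  shows "(\<lambda>k. cf_fin (\<lambda>t. D (j + t)) k) \<longlonglongrightarrow> cf_alpha D j \<and> cf_alpha D j > 0"
proof (induction "M - j" arbitrary: j)
  case 0
  then have "(\<lambda>t. D (j + t)) = (\<lambda>_. 1)" using ev by auto
  then have "(\<lambda>k. cf_fin (\<lambda>t. D (j + t)) k) \<longlonglongrightarrow> gg" using cf_one_lim by simp
  moreover then have "cf_alpha D j = gg" by (simp add: cf_alpha_def cf_val_def limI)
  ultimately show ?case using gg_pos by simp
next
  case (Suc r)
  then have IH: "(\<lambda>k. cf_fin (\<lambda>t. D (Suc j + t)) k) \<longlonglongrightarrow> cf_alpha D (Suc j) \<and> cf_alpha D (Suc j) > 0"
    by (metis Suc_diff_Suc diff_Suc_1 zero_less_Suc zero_less_diff)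
  have "(\<lambda>k. cf_fin (\<lambda>t. D (j + t)) k) \<longlonglongrightarrow> 1 / (real (D (j + 0)) + cf_alpha D (Suc j))"
    by (rule cf_step_lim) (use IH pos in auto)
  moreover then have "cf_alpha D j = 1 / (real (D (j + 0)) + cf_alpha D (Suc j))"
    by (simp add: cf_alpha_def cf_val_def limI)
  ultimately show ?case using IH pos[rule_format, of j] by (auto intro!: divide_pos_pos add_pos_pos)
qed

lemma cf_rec:
  assumes pos: "\<forall>k. D k \<ge> 1" and ev: "\<forall>k\<ge>M. D k = 1"
  shows "cf_alpha D j = 1 / (real (D j) + cf_alpha D (Suc j))"
proof -
  have A: "(\<lambda>k. cf_fin (\<lambda>t. D (j + t)) k) \<longlonglongrightarrow> cf_alpha D j" using cf_conv[OF assms] by blast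
  have B: "(\<lambda>k. cf_fin (\<lambda>t. D (Suc j + t)) k) \<longlonglongrightarrow> cf_alpha D (Suc j)" "cf_alpha D (Suc j) > 0"
    using cf_conv[OF assms] by blast+
  have "(\<lambda>k. cf_fin (\<lambda>t. D (j + t)) k) \<longlonglongrightarrow> 1 / (real (D (j + 0)) + cf_alpha D (Suc j))"
    by (rule cf_step_lim) (use B pos in auto)
  with A show ?thesis using LIMSEQ_unique by fastforce
qed

lemma cf_tail:
  assumes pos: "\<forall>k. D k \<ge> 1" and ev: "\<forall>k\<ge>M. D k = 1" and "j \<ge> M"
  shows "cf_alpha D j = gg"
proof -
  have "(\<lambda>t. D (j + t)) = (\<lambda>_. 1)" using ev assms(3) by auto
  then show ?thesis using cf_one_lim by (simp add: cf_alpha_def cf_val_def limI)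
qed


lemma down_ind:
  assumes "P K" "\<And>i. i < K \<Longrightarrow> P (Suc i) \<Longrightarrow> P i" "i \<le> K"
  shows "P i"
  using assms(3)
proof (induction "K - i" arbitrary: i)
  case 0 then show ?case using assms(1) by (metis diff_is_0_eq le_antisym)
next
  case (Suc r)
  then have "i < K" by simp
  moreover have "P (Suc i)" using Suc by (metis Suc_diff_Suc diff_Suc_1 Suc_leI calculation)
  ultimately show ?case using assms(2) by blast
qed

lemma half1:
  fixes d a b :: real
  assumes "d \<ge> 1" "0 < b" "b \<le> a" "a \<le> 1"
  shows "ln ((d + a) / (d + b)) \<le> ln (a / b) / 2" "0 \<le> ln ((d + a) / (d + b))"
proof -
  have p: "0 < d + b" "0 < d + a" using assms by auto
  have "(a - b) * (a * b - d^2) \<le> 0"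
  proof -
    have "a * b \<le> 1" using assms by (metis mult_le_one less_le_not_le order.trans)
    moreover have "1 \<le> d^2" using assms by (simp add: one_le_power)
    ultimately have "a * b - d^2 \<le> 0" by linarith
    then show ?thesis using assms by (intro mult_nonneg_nonpos) auto
  qed
  then have "(d + a)^2 * b \<le> (d + b)^2 * a" by (simp add: power2_eq_square algebra_simps)
  then have q: "((d + a) / (d + b))^2 \<le> a / b" using p assms
    by (simp add: power_divide divide_simps mult.commute)
  have r: "(d + a) / (d + b) > 0" using p by simp
  have "2 * ln ((d + a) / (d + b)) = ln (((d + a) / (d + b))^2)"
    using r by (simp add: ln_realpow)
  also have "\<dots> \<le> ln (a / b)" using q r assms by (subst ln_le_cancel_iff) auto
  finally show "ln ((d + a) / (d + b)) \<le> ln (a / b) / 2" by simp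
  show "0 \<le> ln ((d + a) / (d + b))" using p assms by simp
qed

lemma halve:
  fixes d a b :: real
  assumes "d \<ge> 1" "0 < a" "a \<le> 1" "0 < b" "b \<le> 1"
  shows "\<bar>ln ((1 / (d + a)) / (1 / (d + b)))\<bar> \<le> \<bar>ln (a / b)\<bar> / 2"
proof -
  have p: "0 < d + b" "0 < d + a" using assms by auto
  have e: "(1 / (d + a)) / (1 / (d + b)) = (d + b) / (d + a)" using p by simp
  show ?thesis
  proof (cases "b \<le> a")
    case True
    note h = half1[OF assms(1) assms(4) True assms(3)]
    have "ln ((d + b) / (d + a)) = - ln ((d + a) / (d + b))" using p by (simp add: ln_div)
    moreover have "ln (a / b) \<ge> 0" using True assms by simp
    ultimately show ?thesis unfolding e using h by linarith
  next
    case False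
    note h = half1[OF assms(1) assms(2) _ assms(5)] 
    have h1: "ln ((d + b) / (d + a)) \<le> ln (b / a) / 2" "0 \<le> ln ((d + b) / (d + a))"
      using h False by auto
    have "ln (b / a) = - ln (a / b)" using assms by (simp add: ln_div)
    then show ?thesis unfolding e using h1 by linarith
  qed
qed

lemma lnratio1:
  fixes d a b :: real
  assumes "d \<ge> 1" "0 < b" "b \<le> a"
  shows "ln (d + a) / ln (d + b) \<le> a / b" "1 \<le> ln (d + a) / ln (d + b)"
proof -
  define A where "A = ln (d + a)"
  define B where "B = ln (d + b)"
  have p: "0 < d + b" "0 < d + a" "1 < d + b" using assms by auto
  have Bp: "B > 0" unfolding B_def using p by simp
  have AB: "B \<le> A" unfolding A_def B_def using p assms by simp
  have "A - B = ln ((d + a) / (d + b))" unfolding A_def B_def using p by (simp add: ln_div)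
  also have "\<dots> \<le> (d + a) / (d + b) - 1" using p by (intro ln_le_minus_one) simp
  also have "\<dots> = (a - b) / (d + b)" using p by (simp add: field_simps)
  finally have d1: "A - B \<le> (a - b) / (d + b)" .
  have "ln (1 / (d + b)) \<le> 1 / (d + b) - 1" using p by (intro ln_le_minus_one) simp
  then have "1 - 1 / (d + b) \<le> B" unfolding B_def using p by (simp add: ln_div)
  moreover have "b / (d + b) \<le> 1 - 1 / (d + b)"
  proof -
    have "b \<le> d + b - 1" using assms by simp
    then have "b / (d + b) \<le> (d + b - 1) / (d + b)" using p by (intro divide_right_mono) auto
    also have "\<dots> = 1 - 1 / (d + b)" using p by (simp add: field_simps)
    finally show ?thesis .
  qed
  ultimately have d2: "b / (d + b) \<le> B" by linarith
  have "(A - B) * b \<le> (a - b) / (d + b) * b" using d1 assms by (intro mult_right_mono) auto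
  also have "\<dots> = (a - b) * (b / (d + b))" by simp
  also have "\<dots> \<le> (a - b) * B" using d2 assms by (intro mult_left_mono) auto
  finally have "A * b \<le> a * B" by (simp add: algebra_simps)
  then show "A / B \<le> a / b" using Bp assms by (simp add: divide_simps mult.commute)
  show "1 \<le> A / B" using AB Bp by simp
qed

lemma lnratio:
  fixes d a b :: real
  assumes "d \<ge> 1" "0 < a" "0 < b"
  shows "\<bar>ln (ln (1 / (1 / (d + a))) / ln (1 / (1 / (d + b))))\<bar> \<le> \<bar>ln (a / b)\<bar>"
proof -
  have p: "1 < d + b" "1 < d + a" using assms by auto
  have e: "ln (1 / (1 / (d + a))) / ln (1 / (1 / (d + b))) = ln (d + a) / ln (d + b)" by simp
  show ?thesis
  proof (cases "b \<le> a")
    case True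
    note h = lnratio1[OF assms(1) assms(3) True]
    have "ln (ln (d + a) / ln (d + b)) \<le> ln (a / b)" using h assms by (subst ln_le_cancel_iff) auto
    moreover have "0 \<le> ln (ln (d + a) / ln (d + b))" using h by simp
    ultimately show ?thesis unfolding e by linarith
  next
    case False
    note h = lnratio1[OF assms(1) assms(2), of b] 
    have h1: "ln (d + b) / ln (d + a) \<le> b / a" "1 \<le> ln (d + b) / ln (d + a)" using h False by auto
    have "ln (ln (d + b) / ln (d + a)) \<le> ln (b / a)" using h1 assms by (subst ln_le_cancel_iff) auto
    moreover have "0 \<le> ln (ln (d + b) / ln (d + a))" using h1 by simp
    moreover have "ln (b / a) = - ln (a / b)" using assms by (simp add: ln_div)
    moreover have "ln (ln (d + b) / ln (d + a)) = - ln (ln (d + a) / ln (d + b))" 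
      using p by (simp add: ln_div)
    ultimately show ?thesis unfolding e by linarith
  qed
qed

lemma exp_half: "1 + gg < exp (1/2)"
proof -
  have "(1 + (1/2) / real 8) ^ 8 \<le> exp (1/2 :: real)"
    by (rule exp_ge_one_plus_x_over_n_power_n) auto
  moreover have "(1 + (1/2) / real 8) ^ 8 = (17/16::real) ^ 8" by simp
  moreover have "(17/16::real) ^ 8 > 162/100" by (simp add: power_divide)
  moreover have "gg < 62/100" using gg_lt by simp
  ultimately show ?thesis by linarith
qed


context
  fixes a :: "nat \<Rightarrow> nat" and n m :: nat
  assumes apos: "\<forall>k\<le>n. a k > 0" and m: "m \<ge> 1"
begin

lemma bd_pos: "N \<ge> 1 \<Longrightarrow> \<forall>k. beta_digits a n m N k \<ge> 1"
  using apos by (auto simp: beta_digits_def Suc_leI)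

lemma bd_ev: "\<forall>k\<ge>Suc (n + m). beta_digits a n m N k = 1"
  by (auto simp: beta_digits_def)

lemma bd_K: "beta_digits a n m N (n + m) = N"
  using m by (auto simp: beta_digits_def)

lemma bd_same: "i \<noteq> n + m \<Longrightarrow> beta_digits a n m N i = beta_digits a n m N' i"
  by (auto simp: beta_digits_def)

lemma X_rec: "N \<ge> 1 \<Longrightarrow> cf_alpha (beta_digits a n m N) i
   = 1 / (real (beta_digits a n m N i) + cf_alpha (beta_digits a n m N) (Suc i))"
  by (rule cf_rec[OF bd_pos bd_ev])

lemma X_pos: "N \<ge> 1 \<Longrightarrow> cf_alpha (beta_digits a n m N) i > 0"
  using cf_conv[OF bd_pos bd_ev] by blast

lemma X_le1: "N \<ge> 1 \<Longrightarrow> cf_alpha (beta_digits a n m N) i \<le> 1"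
proof -
  assume N: "N \<ge> 1"
  have "real (beta_digits a n m N i) \<ge> 1" using bd_pos[OF N] by simp
  moreover have "cf_alpha (beta_digits a n m N) (Suc i) > 0" by (rule X_pos[OF N])
  ultimately show ?thesis using X_rec[OF N, of i] by simp
qed

lemma X_tail: "N \<ge> 1 \<Longrightarrow> cf_alpha (beta_digits a n m N) (Suc (n + m)) = gg"
  by (rule cf_tail[OF bd_pos bd_ev]) auto

lemma X_K: "N \<ge> 1 \<Longrightarrow> cf_alpha (beta_digits a n m N) (n + m) = 1 / (real N + gg)"
  using X_rec[of N "n + m"] X_tail bd_K by simp

lemma X_step:
  assumes "N1 \<ge> 1" "N2 \<ge> 1" "i < n + m"
  shows "\<bar>ln (cf_alpha (beta_digits a n m N1) i / cf_alpha (beta_digits a n m N2) i)\<bar>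
     \<le> \<bar>ln (cf_alpha (beta_digits a n m N1) (Suc i) / cf_alpha (beta_digits a n m N2) (Suc i))\<bar> / 2"
proof -
  have dd: "beta_digits a n m N2 i = beta_digits a n m N1 i" using assms(3) bd_same by auto
  have d1: "real (beta_digits a n m N1 i) \<ge> 1" using bd_pos[OF assms(1)] by simp
  show ?thesis
    unfolding X_rec[OF assms(1), of i] X_rec[OF assms(2), of i] dd
    by (rule halve[OF d1 X_pos[OF assms(1)] X_le1[OF assms(1)] X_pos[OF assms(2)] X_le1[OF assms(2)]])
qed

lemma X_lnstep:
  assumes "N1 \<ge> 1" "N2 \<ge> 1" "i < n + m"
  shows "\<bar>ln (ln (1 / cf_alpha (beta_digits a n m N1) i) / ln (1 / cf_alpha (beta_digits a n m N2) i))\<bar>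
     \<le> \<bar>ln (cf_alpha (beta_digits a n m N1) (Suc i) / cf_alpha (beta_digits a n m N2) (Suc i))\<bar>"
proof -
  have dd: "beta_digits a n m N2 i = beta_digits a n m N1 i" using assms(3) bd_same by auto
  have d1: "real (beta_digits a n m N1 i) \<ge> 1" using bd_pos[OF assms(1)] by simp
  show ?thesis
    unfolding X_rec[OF assms(1), of i] X_rec[OF assms(2), of i] dd
    by (rule lnratio[OF d1 X_pos[OF assms(1)] X_pos[OF assms(2)]])
qed

end

lemma pw: "2 powr (real (Suc i) - real K) = 2 * 2 powr (real i - real K)"
proof -
  have h: "real (Suc i) - real K = (real i - real K) + 1" by simp
  show ?thesis unfolding h powr_add by simp
qed

theorem mainTheorem5:
  fixes a :: "nat \<Rightarrow> nat" and n m N :: nat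
  assumes apos: "\<forall>k\<le>n. a k > 0"
    and m: "m \<ge> 1"
    and N: "N \<ge> 1"
  shows
    "(\<forall>i\<le>n + m. \<bar>ln (cf_alpha (beta_digits a n m N) i / cf_alpha (beta_digits a n m (N + 1)) i)\<bar>
        < 2 powr (real i - real (n + m)) / real N)
   \<and> (\<forall>i<n + m. \<bar>ln (cf_alpha (beta_digits a n m N) i / cf_alpha (beta_digits a n m 1) i)\<bar>
        < 2 powr (real i - real (n + m)))
   \<and> (\<forall>i<n + m. \<bar>ln (ln (1 / cf_alpha (beta_digits a n m N) i) / ln (1 / cf_alpha (beta_digits a n m (N + 1)) i))\<bar>
        < 2 powr (real i - real (n + m) + 1))
   \<and> (\<forall>i. i + 1 < n + m \<longrightarrow> \<bar>ln (ln (1 / cf_alpha (beta_digits a n m N) i) / ln (1 / cf_alpha (beta_digits a n m 1) i))\<bar>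
        < 2 powr (real i - real (n + m) + 1))"
proof -
  define K where "K = n + m"
  define X where "X = (\<lambda>M i. cf_alpha (beta_digits a n m M) i)"
  have N1: "N + 1 \<ge> 1" by simp
  have one: "(1::nat) \<ge> 1" by simp
  have Np: "real N > 0" using N by simp
  have P1: "\<forall>i\<le>K. \<bar>ln (X N i / X (N + 1) i)\<bar> < 2 powr (real i - real K) / real N"
  proof (intro allI impI)
    fix i assume "i \<le> K"
    then show "\<bar>ln (X N i / X (N + 1) i)\<bar> < 2 powr (real i - real K) / real N"
    proof (rule down_ind[of "\<lambda>i. \<bar>ln (X N i / X (N + 1) i)\<bar> < 2 powr (real i - real K) / real N" K, rotated 2])
      have e: "X N K / X (N + 1) K = (real N + 1 + gg) / (real N + gg)"
        unfolding X_def K_def X_K[OF apos m N] X_K[OF apos m N1] using gg_pos by (simp add: field_simps)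
      have r1: "(real N + 1 + gg) / (real N + gg) \<ge> 1" using gg_pos by simp
      have "ln ((real N + 1 + gg) / (real N + gg)) \<le> (real N + 1 + gg) / (real N + gg) - 1"
        using r1 by (intro ln_le_minus_one) simp
      also have "\<dots> = 1 / (real N + gg)" using gg_pos Np by (simp add: field_simps)
      also have "\<dots> < 1 / real N" using gg_pos Np by (simp add: divide_strict_left_mono)
      finally have "ln ((real N + 1 + gg) / (real N + gg)) < 1 / real N" .
      moreover have "ln ((real N + 1 + gg) / (real N + gg)) \<ge> 0" using r1 by simp
      ultimately show "\<bar>ln (X N K / X (N + 1) K)\<bar> < 2 powr (real K - real K) / real N"
        unfolding e by simp
    next
      fix j assume j: "j < K" and IH: "\<bar>ln (X N (Suc j) / X (N + 1) (Suc j))\<bar> < 2 powr (real (Suc j) - real K) / real N"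
      have "\<bar>ln (X N j / X (N + 1) j)\<bar> \<le> \<bar>ln (X N (Suc j) / X (N + 1) (Suc j))\<bar> / 2"
        unfolding X_def by (rule X_step[OF apos m N N1]) (use j K_def in simp)
      also have "\<dots> < 2 powr (real (Suc j) - real K) / real N / 2" using IH by simp
      also have "\<dots> = 2 powr (real j - real K) / real N" unfolding pw by simp
      finally show "\<bar>ln (X N j / X (N + 1) j)\<bar> < 2 powr (real j - real K) / real N" .
    qed
  qed
  have K1: "K \<ge> 1" using m K_def by simp
  have P2: "\<forall>i\<le>K - 1. \<bar>ln (X N i / X 1 i)\<bar> < 2 powr (real i - real K)"
  proof (intro allI impI)
    fix i assume "i \<le> K - 1"
    then show "\<bar>ln (X N i / X 1 i)\<bar> < 2 powr (real i - real K)"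
    proof (rule down_ind[of "\<lambda>i. \<bar>ln (X N i / X 1 i)\<bar> < 2 powr (real i - real K)" "K - 1", rotated 2])
      define d where "d = real (beta_digits a n m N (K - 1))"
      have dd: "beta_digits a n m 1 (K - 1) = beta_digits a n m N (K - 1)"
        using bd_same[OF apos m] K1 K_def by simp
      have d1: "d \<ge> 1" unfolding d_def using bd_pos[OF apos m N] by simp
      have sK: "Suc (K - 1) = K" using K1 by simp
      have xN: "X N (K - 1) = 1 / (d + 1 / (real N + gg))"
        unfolding X_def d_def using X_rec[OF apos m N, of "K - 1"] X_K[OF apos m N] sK K_def by simp
      have x1: "X 1 (K - 1) = 1 / (d + gg)"
        unfolding X_def d_def using X_rec[OF apos m one, of "K - 1"] X_K[OF apos m one] sK K_def dd gg_eq
        by simp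
      define u where "u = 1 / (real N + gg)"
      have u0: "u > 0" unfolding u_def using gg_pos Np by simp
      have ug: "u \<le> gg"
      proof -
        have "u \<le> 1 / (1 + gg)" unfolding u_def using gg_pos N by (intro divide_left_mono) auto
        then show ?thesis using gg_eq by simp
      qed
      have e: "X N (K - 1) / X 1 (K - 1) = (d + gg) / (d + u)"
        unfolding xN x1 u_def using d1 gg_pos Np by (simp add: field_simps add_pos_pos)
      have r1: "(d + gg) / (d + u) \<ge> 1" using ug u0 d1 by simp
      have "(d + gg) / (d + u) \<le> (d + gg) / d" using u0 d1 gg_pos by (intro divide_left_mono) auto
      also have "\<dots> = 1 + gg / d" using d1 by (simp add: field_simps)
      also have "\<dots> \<le> 1 + gg" using d1 gg_pos by (simp add: divide_le_eq)
      also have "\<dots> < exp (1/2)" by (rule exp_half)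
      finally have "ln ((d + gg) / (d + u)) < ln (exp (1/2))" using r1 by (subst ln_less_cancel_iff) auto
      then have "ln ((d + gg) / (d + u)) < 1/2" by simp
        
      moreover have "ln ((d + gg) / (d + u)) \<ge> 0" using r1 by simp
      moreover have "2 powr (real (K - 1) - real K) = 1/2"
        using K1 by (simp add: of_nat_diff powr_minus_divide)
      ultimately show "\<bar>ln (X N (K - 1) / X 1 (K - 1))\<bar> < 2 powr (real (K - 1) - real K)"
        unfolding e by simp
    next
      fix j assume j: "j < K - 1" and IH: "\<bar>ln (X N (Suc j) / X 1 (Suc j))\<bar> < 2 powr (real (Suc j) - real K)"
      have "\<bar>ln (X N j / X 1 j)\<bar> \<le> \<bar>ln (X N (Suc j) / X 1 (Suc j))\<bar> / 2"
        unfolding X_def by (rule X_step[OF apos m N one]) (use j K_def in simp)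
      also have "\<dots> < 2 powr (real (Suc j) - real K) / 2" using IH by simp
      also have "\<dots> = 2 powr (real j - real K)" unfolding pw by simp
      finally show "\<bar>ln (X N j / X 1 j)\<bar> < 2 powr (real j - real K)" .
    qed
  qed
  have pw1: "2 powr (real (Suc i) - real K) = 2 powr (real i - real K + 1)" for i
  proof -
    have h: "real (Suc i) - real K = (real i - real K) + 1" by simp
    show ?thesis by (simp only: h)
  qed
  have P3: "\<forall>i<K. \<bar>ln (ln (1 / X N i) / ln (1 / X (N + 1) i))\<bar> < 2 powr (real i - real K + 1)"
  proof (intro allI impI)
    fix i assume i: "i < K"
    have "\<bar>ln (ln (1 / X N i) / ln (1 / X (N + 1) i))\<bar> \<le> \<bar>ln (X N (Suc i) / X (N + 1) (Suc i))\<bar>"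
      unfolding X_def by (rule X_lnstep[OF apos m N N1]) (use i K_def in simp)
    also have "\<dots> < 2 powr (real (Suc i) - real K) / real N" using P1 i Suc_leI by blast
    also have "\<dots> \<le> 2 powr (real (Suc i) - real K)" using N by (simp add: divide_le_eq)
    finally show "\<bar>ln (ln (1 / X N i) / ln (1 / X (N + 1) i))\<bar> < 2 powr (real i - real K + 1)"
      unfolding pw1 .
  qed
  have P4: "\<forall>i. i + 1 < K \<longrightarrow> \<bar>ln (ln (1 / X N i) / ln (1 / X 1 i))\<bar> < 2 powr (real i - real K + 1)"
  proof (intro allI impI)
    fix i assume i: "i + 1 < K"
    have "\<bar>ln (ln (1 / X N i) / ln (1 / X 1 i))\<bar> \<le> \<bar>ln (X N (Suc i) / X 1 (Suc i))\<bar>"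
      unfolding X_def by (rule X_lnstep[OF apos m N one]) (use i K_def in simp)
    also have "\<dots> < 2 powr (real (Suc i) - real K)" using P2 i by (metis Suc_eq_plus1 Suc_leI less_diff_conv)
    finally show "\<bar>ln (ln (1 / X N i) / ln (1 / X 1 i))\<bar> < 2 powr (real i - real K + 1)"
      unfolding pw1 .
  qed
  have P2': "\<forall>i<K. \<bar>ln (X N i / X 1 i)\<bar> < 2 powr (real i - real K)" using P2 by auto
  show ?thesis using P1 P2' P3 P4 unfolding X_def K_def by blast
qed

end
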